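(* Fix a measurable set $\mathcal{S}\subset\mathbb{R}_{\geq 0}$ with positive Lebesgue measure. Consider the model in which $\mu\sim G$ for a probability distribution $G$ on $\mathbb{R}$, $|Z|\mid\mu\sim|\mathrm{N}(\mu,1)|$, and $D\mid(|Z|,\mu)\sim\mathrm{Bernoulli}(\pi(|Z|))$ for a measurable $\pi:\mathbb{R}_{\ge0}\to[0,1]$, and suppose that the conditional distribution of $|Z|$ given $\{|Z|\in\mathcal{S},D=1\}$ equals the conditional distribution of $|Z|$ given $\{|Z|\in\mathcal{S}\}$. Then $\mathrm{Fold}[G]$ (equivalently $\mathrm{Symm}[G]$) is identified from the distribution of the observed absolute z-scores, i.e. from the conditional law of $|Z|$ given $D=1$: if $(G,\pi)$ and $(H,\pi')$ both satisfy these assumptions (with the same $\mathcal{S}$) and induce the same conditional law of $|Z|$ given $D=1$, then $\mathrm{Fold}[G]=\mathrm{Fold}[H]$.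
   Context: $|\mathrm{N}(\mu,1)|$ is the folded normal distribution (law of $|X|$, $X\sim \mathrm{N}(\mu,1)$). For a distribution $G$ on $\mathbb{R}$, the symmetrized distribution is $\mathrm{Symm}[G](A)=\{G(A)+G(-A)\}/2$ for Borel $A$, and the folded distribution $\mathrm{Fold}[G]$ is the distribution on $[0,\infty)$ with $\mathrm{Fold}[G](A)=G(A)+G(-A)$ for Borel $A\subset[0,\infty)$ and $\mathrm{Fold}[G]((-\infty,0))=0$; i.e. $\mathrm{Fold}[G]$ is the law of $|\mu|$ for $\mu\sim G$. Only $|Z|$ with $D=1$ is observed. *)

theory Defs
  imports "HOL-Probability.Probability"
begin

definition fnorm_dens :: "real \<Rightarrow> real \<Rightarrow> real" where
  "fnorm_dens mu z = (if 0 \<le> z then normal_density mu 1 z + normal_density mu 1 (- z) else 0)"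

text \<open>Joint law of (mu, |Z|, D): mu ~ G, |Z| | mu ~ |N(mu,1)|, D | (|Z|,mu) ~ Bernoulli(pi |Z|).\<close>
definition model :: "real measure \<Rightarrow> (real \<Rightarrow> real) \<Rightarrow> (real \<times> real \<times> bool) measure" where
  "model G p = density (G \<Otimes>\<^sub>M (lborel \<Otimes>\<^sub>M count_space UNIV))
     (\<lambda>(mu, z, d). ennreal (fnorm_dens mu z * (if d then p z else 1 - p z)))"

definition cond_law_absZ :: "(real \<times> real \<times> bool) measure \<Rightarrow> (real \<times> real \<times> bool) set \<Rightarrow> real set \<Rightarrow> real" where
  "cond_law_absZ M E A = measure M ({(mu, z, d). z \<in> A} \<inter> E) / measure M E"

definition ev_S_D :: "real set \<Rightarrow> (real \<times> real \<times> bool) set" where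
  "ev_S_D S = {(mu, z, d). z \<in> S \<and> d}"

definition ev_S :: "real set \<Rightarrow> (real \<times> real \<times> bool) set" where
  "ev_S S = {(mu, z, d). z \<in> S}"

definition ev_D :: "(real \<times> real \<times> bool) set" where
  "ev_D = {(mu, z, d). d}"

definition selection_ok :: "real set \<Rightarrow> (real \<times> real \<times> bool) measure \<Rightarrow> bool" where
  "selection_ok S M \<longleftrightarrow> measure M (ev_S_D S) > 0 \<and> measure M (ev_S S) > 0 \<and>
     (\<forall>A \<in> sets borel. cond_law_absZ M (ev_S_D S) A = cond_law_absZ M (ev_S S) A)"

definition pub_prob :: "(real \<Rightarrow> real) \<Rightarrow> bool" where
  "pub_prob p \<longleftrightarrow> p \<in> borel_measurable (restrict_space borel {0..}) \<and> (\<forall>z\<ge>0. 0 \<le> p z \<and> p z \<le> 1)"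

definition Fold :: "real measure \<Rightarrow> real measure" where
  "Fold G = distr G borel abs"

end

theory Submission
  imports Defs "HOL-Complex_Analysis.Complex_Analysis"
begin


definition wt :: "real \<Rightarrow> real" where "wt mu = exp (- (mu\<^sup>2) / 2)"
definition Kz :: "real \<Rightarrow> real" where "Kz z = exp (- (z\<^sup>2) / 2) / sqrt (2 * pi)"
definition fG :: "real measure \<Rightarrow> real \<Rightarrow> real" where "fG G z = (\<integral>mu. fnorm_dens mu z \<partial>G)"

lemma fnorm_dens_nonneg: "0 \<le> fnorm_dens mu z"
  by (simp add: fnorm_dens_def)

lemma fnorm_dens_neg: "z < 0 \<Longrightarrow> fnorm_dens mu z = 0"
  by (simp add: fnorm_dens_def)

lemma fnorm_dens_meas[measurable]: "(\<lambda>(mu, z). fnorm_dens mu z) \<in> borel_measurable (borel \<Otimes>\<^sub>M borel)"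
  unfolding fnorm_dens_def normal_density_def by measurable

lemma normal_density_le1: "normal_density mu 1 z \<le> 1"
proof -
  have "exp (- (z - mu)\<^sup>2 / 2) \<le> 1" by simp
  moreover have "1 / sqrt (2 * pi) \<le> 1" using pi_gt3 by (simp add: divide_le_eq)
  ultimately have "1 / sqrt (2 * pi) * exp (- (z - mu)\<^sup>2 / 2) \<le> 1 * 1"
    by (intro mult_mono) auto
  then show ?thesis by (simp add: normal_density_def)
qed

lemma fnorm_dens_le2: "fnorm_dens mu z \<le> 2"
  using normal_density_le1[of mu z] normal_density_le1[of mu "-z"]
  by (simp add: fnorm_dens_def)

lemma fnorm_dens_factor: "0 \<le> z \<Longrightarrow> fnorm_dens mu z = Kz z * (wt mu * (exp (z * mu) + exp (- (z * mu))))"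
proof -
  assume "0 \<le> z"
  have e1: "exp (- ((z - mu)\<^sup>2 / 2)) = exp (mu * z) * (exp (- (mu\<^sup>2 / 2)) * exp (- (z\<^sup>2 / 2)))"
    unfolding exp_add[symmetric] by (rule arg_cong[where f=exp]) (simp add: power2_eq_square field_simps)
  have e2: "exp (- ((- z - mu)\<^sup>2 / 2)) = exp (- (mu * z)) * (exp (- (mu\<^sup>2 / 2)) * exp (- (z\<^sup>2 / 2)))"
    unfolding exp_add[symmetric] by (rule arg_cong[where f=exp]) (simp add: power2_eq_square field_simps)
  show ?thesis using \<open>0 \<le> z\<close>
    by (simp add: fnorm_dens_def normal_density_def e1 e2 Kz_def wt_def algebra_simps)
qed

lemma sum_bool_ind:
  fixes a :: "bool \<Rightarrow> real"
  assumes "\<And>d. 0 \<le> a d"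
  shows "(\<Sum>d\<in>UNIV. ennreal (a d) * indicator D d) = ennreal (\<Sum>d\<in>D. a d)"
proof -
  have "(\<Sum>d\<in>UNIV. ennreal (a d) * indicator D d) = (\<Sum>d\<in>UNIV. if d \<in> D then ennreal (a d) else 0)"
    by (intro sum.cong) (auto simp: indicator_def)
  also have "\<dots> = (\<Sum>d\<in>D. ennreal (a d))"
    by (simp add: sum.If_cases)
  also have "\<dots> = ennreal (\<Sum>d\<in>D. a d)" using assms by simp
  finally show ?thesis .
qed

lemma pub_prob_meas:
  assumes "pub_prob p"
  shows "(\<lambda>z. indicator {0..} z * p z) \<in> borel_measurable borel"
  using assms unfolding pub_prob_def
  using borel_measurable_restrict_space_iff[of "{0..}" borel p] by simp

lemma fG_integrable:
  assumes G: "prob_space G" "sets G = sets borel"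
  shows "integrable G (\<lambda>mu. fnorm_dens mu z * c)"
proof -
  interpret prob_space G by (rule G(1))
  have m0: "(\<lambda>mu. fnorm_dens mu z) \<in> borel_measurable borel"
    unfolding fnorm_dens_def normal_density_def by measurable
  have m: "(\<lambda>mu. fnorm_dens mu z) \<in> borel_measurable G"
    by (subst measurable_cong_sets[OF G(2) refl]) (rule m0)
  show ?thesis
    by (rule integrable_const_bound[where B="2 * \<bar>c\<bar>"])
       (use m fnorm_dens_le2 fnorm_dens_nonneg in \<open>auto simp: abs_mult intro!: mult_right_mono\<close>)
qed

lemma model_emeasure:
  assumes G: "prob_space G" "sets G = sets borel" and p: "pub_prob p" and A: "A \<in> sets borel"
  shows "emeasure (model G p) {(mu, z, d). z \<in> A \<and> d \<in> D} =
     (\<integral>\<^sup>+ z. ennreal (fG G z * (\<Sum>d\<in>D. if d then p z else 1 - p z)) * indicator A z \<partial>lborel)"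
proof -
  interpret G: prob_space G by (rule G(1))
  define pp where "pp z = indicator {0..} z * p z" for z
  have pp_m[measurable]: "pp \<in> borel_measurable borel" unfolding pp_def using pub_prob_meas[OF p] .
  have pp01: "0 \<le> pp z" "pp z \<le> 1" for z using p unfolding pp_def pub_prob_def by (auto simp: indicator_def)
  define a where "a mu z d = fnorm_dens mu z * (if d then pp z else 1 - pp z)" for mu z d
  have a_nn: "0 \<le> a mu z d" for mu z d using pp01[of z] fnorm_dens_nonneg[of mu z] unfolding a_def by auto
  define f where "f = (\<lambda>(mu, z, d). ennreal (a mu z d))"
  define N where "N = G \<Otimes>\<^sub>M ((lborel::real measure) \<Otimes>\<^sub>M count_space (UNIV :: bool set))"
  have sN: "sets N = sets (borel \<Otimes>\<^sub>M ((lborel::real measure) \<Otimes>\<^sub>M count_space (UNIV :: bool set)))"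
    unfolding N_def by (rule sets_pair_measure_cong[OF G(2) refl])
  have a_m: "(\<lambda>(mu, z, d). a mu z d) \<in> borel_measurable (borel \<Otimes>\<^sub>M ((lborel::real measure) \<Otimes>\<^sub>M count_space (UNIV :: bool set)))"
    unfolding a_def fnorm_dens_def normal_density_def by measurable
  have f_m: "f \<in> borel_measurable N"
    by (subst measurable_cong_sets[OF sN refl]) (unfold f_def a_def fnorm_dens_def normal_density_def, measurable)
  have model: "model G p = density N f"
    unfolding model_def N_def f_def a_def
  proof (rule arg_cong[where f="density _"])
    have e: "fnorm_dens mu z * (indicator {0..} z * c) = fnorm_dens mu z * c"
      "fnorm_dens mu z * (1 - indicator {0..} z * c) = fnorm_dens mu z * (1 - c)" for mu z c
      by (cases "0 \<le> z"; simp add: fnorm_dens_neg)+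
    show "(\<lambda>(mu, z, d). ennreal (fnorm_dens mu z * (if d then p z else 1 - p z))) =
      (\<lambda>(mu, z, d). ennreal (fnorm_dens mu z * (if d then pp z else 1 - pp z)))"
      by (auto simp: fun_eq_iff pp_def e)
  qed
  define X where "X = {(mu::real, z::real, d::bool). z \<in> A \<and> d \<in> D}"
  have X_m: "X \<in> sets N"
  proof -
    have "X = {x \<in> space (borel \<Otimes>\<^sub>M ((lborel::real measure) \<Otimes>\<^sub>M count_space (UNIV :: bool set))). fst (snd x) \<in> A \<and> snd (snd x) \<in> D}"
      by (auto simp: X_def space_pair_measure)
    also have "\<dots> \<in> sets (borel \<Otimes>\<^sub>M ((lborel::real measure) \<Otimes>\<^sub>M count_space (UNIV :: bool set)))"
      using A by measurable
    finally show ?thesis using sN by simp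
  qed
  have "emeasure (model G p) X = (\<integral>\<^sup>+x. f x * indicator X x \<partial>N)"
    unfolding model using f_m X_m by (simp add: emeasure_density)
  also have "\<dots> = (\<integral>\<^sup>+mu. \<integral>\<^sup>+y. f (mu, y) * indicator X (mu, y) \<partial>((lborel::real measure) \<Otimes>\<^sub>M count_space (UNIV :: bool set)) \<partial>G)"
    unfolding N_def
  proof (rule sigma_finite_measure.nn_integral_fst[symmetric])
    show "sigma_finite_measure ((lborel::real measure) \<Otimes>\<^sub>M count_space (UNIV::bool set))"
      by (intro sigma_finite_pair_measure lborel.sigma_finite_measure_axioms sigma_finite_measure_count_space_finite) auto
    note [measurable] = f_m X_m
    show "(\<lambda>x. f x * indicator X x) \<in> borel_measurable (G \<Otimes>\<^sub>M ((lborel::real measure) \<Otimes>\<^sub>M count_space UNIV))"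
      unfolding N_def[symmetric] by measurable
  qed
  also have "\<dots> = (\<integral>\<^sup>+mu. \<integral>\<^sup>+z. ennreal (fnorm_dens mu z * (\<Sum>d\<in>D. if d then pp z else 1 - pp z)) * indicator A z \<partial>lborel \<partial>G)"
  proof (rule nn_integral_cong)
    fix mu
    have "(\<integral>\<^sup>+y. f (mu, y) * indicator X (mu, y) \<partial>((lborel::real measure) \<Otimes>\<^sub>M count_space (UNIV :: bool set)))
       = (\<integral>\<^sup>+z. \<integral>\<^sup>+d. f (mu, z, d) * indicator X (mu, z, d) \<partial>count_space UNIV \<partial>lborel)"
    proof (rule sigma_finite_measure.nn_integral_fst[symmetric])
      show "sigma_finite_measure (count_space (UNIV::bool set))"
        by (rule sigma_finite_measure_count_space_finite) auto
      have eq: "(\<lambda>y. f (mu, y) * indicator X (mu, y)) =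
          (\<lambda>y. ennreal (a mu (fst y) (snd y)) * indicator A (fst y) * indicator D (snd y))"
        by (auto simp: fun_eq_iff f_def X_def split: split_indicator)
      show "(\<lambda>y. f (mu, y) * indicator X (mu, y)) \<in> borel_measurable ((lborel::real measure) \<Otimes>\<^sub>M count_space UNIV)"
        unfolding eq a_def fnorm_dens_def normal_density_def using A by measurable
    qed
    also have "\<dots> = (\<integral>\<^sup>+z. ennreal (fnorm_dens mu z * (\<Sum>d\<in>D. if d then pp z else 1 - pp z)) * indicator A z \<partial>lborel)"
    proof (rule nn_integral_cong)
      fix z
      have "(\<integral>\<^sup>+d. f (mu, z, d) * indicator X (mu, z, d) \<partial>count_space UNIV) =
          (\<Sum>d\<in>UNIV. ennreal (a mu z d) * indicator D d) * indicator A z"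
        by (simp add: nn_integral_count_space_finite f_def X_def sum_distrib_right indicator_def)
      also have "\<dots> = ennreal (\<Sum>d\<in>D. a mu z d) * indicator A z"
        using sum_bool_ind[of "a mu z" D] a_nn by simp
      finally show "(\<integral>\<^sup>+d. f (mu, z, d) * indicator X (mu, z, d) \<partial>count_space UNIV) =
          ennreal (fnorm_dens mu z * (\<Sum>d\<in>D. if d then pp z else 1 - pp z)) * indicator A z"
        by (simp add: a_def sum_distrib_left)
    qed
    finally show "(\<integral>\<^sup>+y. f (mu, y) * indicator X (mu, y) \<partial>((lborel::real measure) \<Otimes>\<^sub>M count_space (UNIV :: bool set))) =
       (\<integral>\<^sup>+z. ennreal (fnorm_dens mu z * (\<Sum>d\<in>D. if d then pp z else 1 - pp z)) * indicator A z \<partial>lborel)" .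
  qed
  also have "\<dots> = (\<integral>\<^sup>+z. \<integral>\<^sup>+mu. ennreal (fnorm_dens mu z * (\<Sum>d\<in>D. if d then pp z else 1 - pp z)) * indicator A z \<partial>G \<partial>lborel)"
  proof (rule pair_sigma_finite.Fubini'[symmetric])
    show "pair_sigma_finite G (lborel::real measure)"
      by (simp add: pair_sigma_finite_def G.sigma_finite_measure_axioms lborel.sigma_finite_measure_axioms)
    have sGL: "sets (G \<Otimes>\<^sub>M (lborel::real measure)) = sets (borel \<Otimes>\<^sub>M (lborel::real measure))"
      by (rule sets_pair_measure_cong[OF G(2) refl])
    show "(\<lambda>(mu, z). ennreal (fnorm_dens mu z * (\<Sum>d\<in>D. if d then pp z else 1 - pp z)) * indicator A z)
        \<in> borel_measurable (G \<Otimes>\<^sub>M lborel)"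
      by (subst measurable_cong_sets[OF sGL refl]) (unfold fnorm_dens_def normal_density_def, use A in measurable)
  qed
  also have "\<dots> = (\<integral>\<^sup>+ z. ennreal (fG G z * (\<Sum>d\<in>D. if d then p z else 1 - p z)) * indicator A z \<partial>lborel)"
  proof (rule nn_integral_cong)
    fix z :: real
    define q where "q = (\<Sum>d\<in>D. if d then pp z else 1 - pp z)"
    have q_nn: "0 \<le> q" unfolding q_def using pp01[of z] by (intro sum_nonneg) auto
    have m0: "(\<lambda>mu. fnorm_dens mu z) \<in> borel_measurable borel"
      unfolding fnorm_dens_def normal_density_def by measurable
    have m: "(\<lambda>mu. fnorm_dens mu z) \<in> borel_measurable G"
      by (subst measurable_cong_sets[OF G(2) refl]) (rule m0)
    have "(\<integral>\<^sup>+mu. ennreal (fnorm_dens mu z * q) * indicator A z \<partial>G) =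
        (\<integral>\<^sup>+mu. ennreal (fnorm_dens mu z * q) \<partial>G) * indicator A z"
      by (rule nn_integral_multc) (use m in measurable)
    also have "(\<integral>\<^sup>+mu. ennreal (fnorm_dens mu z * q) \<partial>G) = ennreal (\<integral>mu. fnorm_dens mu z * q \<partial>G)"
      by (rule nn_integral_eq_integral[OF fG_integrable[OF G]]) (use q_nn fnorm_dens_nonneg in simp)
    also have "(\<integral>mu. fnorm_dens mu z * q \<partial>G) = fG G z * q"
      by (simp add: fG_def)
    also have "fG G z * q = fG G z * (\<Sum>d\<in>D. if d then p z else 1 - p z)"
    proof (cases "0 \<le> z")
      case True
      then have ppz: "pp z = p z" by (simp add: pp_def indicator_def)
      show ?thesis unfolding q_def ppz ..
    next
      case False
      then show ?thesis by (simp add: fG_def fnorm_dens_neg)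
    qed
    finally show "(\<integral>\<^sup>+mu. ennreal (fnorm_dens mu z * (\<Sum>d\<in>D. if d then pp z else 1 - pp z)) * indicator A z \<partial>G) =
      ennreal (fG G z * (\<Sum>d\<in>D. if d then p z else 1 - p z)) * indicator A z"
      unfolding q_def .
  qed
  finally show ?thesis unfolding X_def .
qed



lemma fG_meas[measurable]:
  assumes G: "prob_space G" "sets G = sets borel"
  shows "fG G \<in> borel_measurable borel"
proof -
  interpret G: prob_space G by (rule G(1))
  have s: "sets (borel \<Otimes>\<^sub>M G) = sets (borel \<Otimes>\<^sub>M (borel::real measure))"
    by (rule sets_pair_measure_cong[OF refl G(2)])
  have "(\<lambda>(z, mu). fnorm_dens mu z) \<in> borel_measurable (borel \<Otimes>\<^sub>M G)"
    by (subst measurable_cong_sets[OF s refl]) (unfold fnorm_dens_def normal_density_def, measurable)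
  then show ?thesis unfolding fG_def[abs_def]
    by (rule G.borel_measurable_lebesgue_integral)
qed

lemma fG_nonneg: "0 \<le> fG G z"
  unfolding fG_def by (rule integral_nonneg_AE) (simp add: fnorm_dens_nonneg)

lemma normal_density_reflect: "normal_density mu 1 (- z) = normal_density (- mu) 1 z"
  by (simp add: normal_density_def power2_eq_square algebra_simps)

lemma nn_integral_fnorm_le: "(\<integral>\<^sup>+z. ennreal (fnorm_dens mu z) \<partial>lborel) \<le> 2"
proof -
  have "(\<integral>\<^sup>+z. ennreal (fnorm_dens mu z) \<partial>lborel) \<le>
      (\<integral>\<^sup>+z. ennreal (normal_density mu 1 z) + ennreal (normal_density (- mu) 1 z) \<partial>lborel)"
    by (intro nn_integral_mono)
       (auto simp: fnorm_dens_def normal_density_reflect ennreal_plus[symmetric] simp del: ennreal_plus)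
  also have "\<dots> = (\<integral>\<^sup>+z. ennreal (normal_density mu 1 z) \<partial>lborel) + (\<integral>\<^sup>+z. ennreal (normal_density (- mu) 1 z) \<partial>lborel)"
    by (rule nn_integral_add) auto
  also have "\<dots> = 1 + 1"
  proof -
    have n: "(\<integral>\<^sup>+z. ennreal (normal_density m 1 z) \<partial>lborel) = 1" for m
      by (subst nn_integral_eq_integral) auto
    show ?thesis by (simp only: n)
  qed
  finally show ?thesis by (simp add: one_add_one)
qed

lemma fG_nn_integral_le:
  assumes G: "prob_space G" "sets G = sets borel"
  shows "(\<integral>\<^sup>+z. ennreal (fG G z) \<partial>lborel) \<le> 2"
proof -
  interpret G: prob_space G by (rule G(1))
  have "(\<integral>\<^sup>+z. ennreal (fG G z) \<partial>lborel) = (\<integral>\<^sup>+z. \<integral>\<^sup>+mu. ennreal (fnorm_dens mu z) \<partial>G \<partial>lborel)"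
  proof (rule nn_integral_cong)
    fix z
    show "ennreal (fG G z) = (\<integral>\<^sup>+mu. ennreal (fnorm_dens mu z) \<partial>G)"
      unfolding fG_def using fG_integrable[OF G, of z 1]
      by (subst nn_integral_eq_integral) (auto simp: fnorm_dens_nonneg)
  qed
  also have "\<dots> = (\<integral>\<^sup>+mu. \<integral>\<^sup>+z. ennreal (fnorm_dens mu z) \<partial>lborel \<partial>G)"
  proof (rule pair_sigma_finite.Fubini')
    show "pair_sigma_finite G (lborel::real measure)"
      by (simp add: pair_sigma_finite_def G.sigma_finite_measure_axioms lborel.sigma_finite_measure_axioms)
    have sGL: "sets (G \<Otimes>\<^sub>M (lborel::real measure)) = sets (borel \<Otimes>\<^sub>M (lborel::real measure))"
      by (rule sets_pair_measure_cong[OF G(2) refl])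
    show "(\<lambda>(mu, z). ennreal (fnorm_dens mu z)) \<in> borel_measurable (G \<Otimes>\<^sub>M lborel)"
      by (subst measurable_cong_sets[OF sGL refl]) (unfold fnorm_dens_def normal_density_def, measurable)
  qed
  also have "\<dots> \<le> (\<integral>\<^sup>+mu. 2 \<partial>G)"
    by (intro nn_integral_mono nn_integral_fnorm_le)
  also have "\<dots> = 2" by (simp add: G.emeasure_space_1)
  finally show ?thesis .
qed

lemma model_emeasure_all:
  assumes G: "prob_space G" "sets G = sets borel" and p: "pub_prob p" and A: "A \<in> sets borel"
  shows "emeasure (model G p) {(mu, z, d). z \<in> A \<and> d \<in> UNIV} = (\<integral>\<^sup>+ z. ennreal (fG G z) * indicator A z \<partial>lborel)"
  using model_emeasure[OF G p A, of UNIV] by (simp add: UNIV_bool)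

lemma model_emeasure_D:
  assumes G: "prob_space G" "sets G = sets borel" and p: "pub_prob p" and A: "A \<in> sets borel"
  shows "emeasure (model G p) {(mu, z, d). z \<in> A \<and> d \<in> {True}} = (\<integral>\<^sup>+ z. ennreal (fG G z * p z) * indicator A z \<partial>lborel)"
  using model_emeasure[OF G p A, of "{True}"] by simp

lemma Phi_fin:
  assumes G: "prob_space G" "sets G = sets borel"
  shows "(\<integral>\<^sup>+ z. ennreal (fG G z) * indicator A z \<partial>lborel) < \<infinity>"
proof -
  have "(\<integral>\<^sup>+ z. ennreal (fG G z) * indicator A z \<partial>lborel) \<le> (\<integral>\<^sup>+z. ennreal (fG G z) \<partial>lborel)"
    by (intro nn_integral_mono) (auto split: split_indicator)
  also have "\<dots> \<le> 2" by (rule fG_nn_integral_le[OF G])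
  finally show ?thesis by (simp add: le_less_trans)
qed

lemma Psi_fin:
  assumes G: "prob_space G" "sets G = sets borel" and p: "pub_prob p"
  shows "(\<integral>\<^sup>+ z. ennreal (fG G z * p z) * indicator A z \<partial>lborel) < \<infinity>"
proof -
  have "(\<integral>\<^sup>+ z. ennreal (fG G z * p z) * indicator A z \<partial>lborel) \<le> (\<integral>\<^sup>+ z. ennreal (fG G z) * indicator A z \<partial>lborel)"
  proof (intro nn_integral_mono)
    fix z
    have "fG G z * p z \<le> fG G z"
    proof (cases "0 \<le> z")
      case True
      then have "p z \<le> 1" using p by (simp add: pub_prob_def)
      then show ?thesis using fG_nonneg[of G z] by (simp add: mult_left_le)
    next
      case False
      then show ?thesis by (simp add: fG_def fnorm_dens_neg)
    qed
    then show "ennreal (fG G z * p z) * indicator A z \<le> ennreal (fG G z) * indicator A z"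
      by (auto split: split_indicator intro: ennreal_leI)
  qed
  also have "\<dots> < \<infinity>" by (rule Phi_fin[OF G])
  finally show ?thesis .
qed



lemma ev_eqs:
  "ev_S_D S = {(mu, z, d). z \<in> S \<and> d \<in> {True}}"
  "ev_S S = {(mu, z, d). z \<in> S \<and> d \<in> UNIV}"
  "ev_D = {(mu, z, d). z \<in> UNIV \<and> d \<in> {True}}"
  "{(mu, z, d). z \<in> A} \<inter> ev_S_D S = {(mu, z, d). z \<in> A \<inter> S \<and> d \<in> {True}}"
  "{(mu, z, d). z \<in> A} \<inter> ev_S S = {(mu, z, d). z \<in> A \<inter> S \<and> d \<in> UNIV}"
  "{(mu, z, d). z \<in> A} \<inter> ev_D = {(mu, z, d). z \<in> A \<and> d \<in> {True}}"
  by (auto simp: ev_S_D_def ev_S_def ev_D_def)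

lemma key_per_model:
  assumes G: "prob_space G" "sets G = sets borel" and p: "pub_prob p" and S: "S \<in> sets borel"
    and sel: "selection_ok S (model G p)"
  obtains \<kappa> where "0 < \<kappa>"
    "\<And>A. A \<in> sets borel \<Longrightarrow> cond_law_absZ (model G p) ev_D (A \<inter> S) =
        \<kappa> * enn2real (\<integral>\<^sup>+ z. ennreal (fG G z) * indicator (A \<inter> S) z \<partial>lborel)"
proof -
  define Phi where "Phi A = enn2real (\<integral>\<^sup>+ z. ennreal (fG G z) * indicator A z \<partial>lborel)" for A
  define Psi where "Psi A = enn2real (\<integral>\<^sup>+ z. ennreal (fG G z * p z) * indicator A z \<partial>lborel)" for A
  have mU: "measure (model G p) {(mu, z, d). z \<in> A \<and> d \<in> UNIV} = Phi A" if "A \<in> sets borel" for A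
    unfolding measure_def Phi_def using model_emeasure_all[OF G p that] by simp
  have mD: "measure (model G p) {(mu, z, d). z \<in> A \<and> d \<in> {True}} = Psi A" if "A \<in> sets borel" for A
    unfolding measure_def Psi_def using model_emeasure_D[OF G p that] by simp
  define a where "a = Psi S"
  define b where "b = Phi S"
  define c where "c = Psi UNIV"
  have a_pos: "0 < a" using sel mD[OF S] unfolding selection_ok_def a_def ev_eqs by simp
  have b_pos: "0 < b" using sel mU[OF S] unfolding selection_ok_def b_def ev_eqs by simp
  have finU: "(\<integral>\<^sup>+ z. ennreal (fG G z * p z) \<partial>lborel) < \<infinity>"
    using Psi_fin[OF G p, of UNIV] by simp
  have "a \<le> c"
    using finU unfolding a_def c_def Psi_def
    by (intro enn2real_mono nn_integral_mono)
       (auto simp: Psi_fin[OF G p, THEN less_imp_le, of UNIV] Psi_fin[OF G p] less_top[symmetric] split: split_indicator)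
  then have c_pos: "0 < c" using a_pos by simp
  show ?thesis
  proof
    show "0 < a / (b * c)" using a_pos b_pos c_pos by simp
    fix A :: "real set" assume A: "A \<in> sets borel"
    have AS: "A \<inter> S \<in> sets borel" using A S by simp
    have "cond_law_absZ (model G p) (ev_S_D S) A = cond_law_absZ (model G p) (ev_S S) A"
      using sel A unfolding selection_ok_def by blast
    then have "Psi (A \<inter> S) / a = Phi (A \<inter> S) / b"
      unfolding cond_law_absZ_def ev_eqs(4,5) unfolding ev_eqs(1,2) mU[OF AS] mD[OF AS] mU[OF S] mD[OF S] a_def b_def .
    then have eq: "Psi (A \<inter> S) = a / b * Phi (A \<inter> S)"
      using a_pos b_pos by (simp add: field_simps)
    have mDU: "measure (model G p) {(mu, z, d). z \<in> UNIV \<and> d \<in> {True}} = Psi UNIV"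
      by (rule mD) simp
    have "cond_law_absZ (model G p) ev_D (A \<inter> S) = Psi (A \<inter> S) / c"
      unfolding cond_law_absZ_def ev_eqs(6) unfolding ev_eqs(3) mD[OF AS] mDU c_def ..
    also have "\<dots> = a / (b * c) * Phi (A \<inter> S)"
      using c_pos by (simp add: eq field_simps)
    finally show "cond_law_absZ (model G p) ev_D (A \<inter> S) =
        a / (b * c) * enn2real (\<integral>\<^sup>+ z. ennreal (fG G z) * indicator (A \<inter> S) z \<partial>lborel)"
      unfolding Phi_def .
  qed
qed



lemma dens_eq_on_S:
  assumes G: "prob_space G" "sets G = sets borel" and H: "prob_space H" "sets H = sets borel"
    and p: "pub_prob p" and p': "pub_prob p'" and S: "S \<in> sets borel"
    and selG: "selection_ok S (model G p)" and selH: "selection_ok S (model H p')"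
    and obs: "\<forall>A \<in> sets borel. cond_law_absZ (model G p) ev_D A = cond_law_absZ (model H p') ev_D A"
  obtains \<kappa>G \<kappa>H where "0 < \<kappa>G" "0 < \<kappa>H" "AE z in lborel. z \<in> S \<longrightarrow> \<kappa>G * fG G z = \<kappa>H * fG H z"
proof -
  obtain \<kappa>G where kG: "0 < \<kappa>G" "\<And>A. A \<in> sets borel \<Longrightarrow> cond_law_absZ (model G p) ev_D (A \<inter> S) =
        \<kappa>G * enn2real (\<integral>\<^sup>+ z. ennreal (fG G z) * indicator (A \<inter> S) z \<partial>lborel)"
    using key_per_model[OF G p S selG] by blast
  obtain \<kappa>H where kH: "0 < \<kappa>H" "\<And>A. A \<in> sets borel \<Longrightarrow> cond_law_absZ (model H p') ev_D (A \<inter> S) =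
        \<kappa>H * enn2real (\<integral>\<^sup>+ z. ennreal (fG H z) * indicator (A \<inter> S) z \<partial>lborel)"
    using key_per_model[OF H p' S selH] by blast
  have dens: "emeasure (density lborel (\<lambda>z. ennreal (\<kappa> * fG K z * indicator S z))) A =
      ennreal (\<kappa> * enn2real (\<integral>\<^sup>+ z. ennreal (fG K z) * indicator (A \<inter> S) z \<partial>lborel))"
    if K: "prob_space K" "sets K = sets borel" and k: "0 < \<kappa>" and A: "A \<in> sets borel" for K \<kappa> A
  proof -
    note [measurable] = fG_meas[OF K]
    have "emeasure (density lborel (\<lambda>z. ennreal (\<kappa> * fG K z * indicator S z))) A =
        (\<integral>\<^sup>+ z. ennreal (\<kappa> * fG K z * indicator S z) * indicator A z \<partial>lborel)"
      by (rule emeasure_density) (use S A in auto)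
    also have "\<dots> = (\<integral>\<^sup>+ z. ennreal \<kappa> * (ennreal (fG K z) * indicator (A \<inter> S) z) \<partial>lborel)"
      by (intro nn_integral_cong) (use k fG_nonneg[of K] in \<open>auto split: split_indicator simp: ennreal_mult\<close>)
    also have "\<dots> = ennreal \<kappa> * (\<integral>\<^sup>+ z. ennreal (fG K z) * indicator (A \<inter> S) z \<partial>lborel)"
      by (rule nn_integral_cmult) (use S A in measurable)
    also have "\<dots> = ennreal (\<kappa> * enn2real (\<integral>\<^sup>+ z. ennreal (fG K z) * indicator (A \<inter> S) z \<partial>lborel))"
      using Phi_fin[OF K, of "A \<inter> S"] k by (simp add: ennreal_mult less_top)
    finally show ?thesis .
  qed
  have deq: "density lborel (\<lambda>z. ennreal (\<kappa>G * fG G z * indicator S z)) =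
      density lborel (\<lambda>z. ennreal (\<kappa>H * fG H z * indicator S z))"
  proof (rule measure_eqI)
    show "sets (density lborel (\<lambda>z. ennreal (\<kappa>G * fG G z * indicator S z))) =
        sets (density lborel (\<lambda>z. ennreal (\<kappa>H * fG H z * indicator S z)))" by simp
    fix A assume "A \<in> sets (density lborel (\<lambda>z. ennreal (\<kappa>G * fG G z * indicator S z)))"
    then have A: "A \<in> sets borel" by simp
    have "cond_law_absZ (model G p) ev_D (A \<inter> S) = cond_law_absZ (model H p') ev_D (A \<inter> S)"
      using obs A S by blast
    then show "emeasure (density lborel (\<lambda>z. ennreal (\<kappa>G * fG G z * indicator S z))) A =
        emeasure (density lborel (\<lambda>z. ennreal (\<kappa>H * fG H z * indicator S z))) A"
      unfolding dens[OF G kG(1) A] dens[OF H kH(1) A] kG(2)[OF A] kH(2)[OF A] by simp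
  qed
  note [measurable] = fG_meas[OF G] fG_meas[OF H]
  have mG: "(\<lambda>z. ennreal (\<kappa>G * fG G z * indicator S z)) \<in> borel_measurable lborel"
    using S by measurable
  have mH: "(\<lambda>z. ennreal (\<kappa>H * fG H z * indicator S z)) \<in> borel_measurable lborel"
    using S by measurable
  have ae1: "AE z in lborel. ennreal (\<kappa>G * fG G z * indicator S z) = ennreal (\<kappa>H * fG H z * indicator S z)"
    by (rule sigma_finite_measure.density_unique[OF lborel.sigma_finite_measure_axioms mG mH deq])
  have "AE z in lborel. z \<in> S \<longrightarrow> \<kappa>G * fG G z = \<kappa>H * fG H z"
    using ae1
  proof eventually_elim
    case (elim z)
    show "z \<in> S \<longrightarrow> \<kappa>G * fG G z = \<kappa>H * fG H z"
    proof
      assume "z \<in> S"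
      then show "\<kappa>G * fG G z = \<kappa>H * fG H z"
        using elim kG(1) kH(1) fG_nonneg[of G z] fG_nonneg[of H z] by simp
    qed
  qed
  then show ?thesis using kG(1) kH(1) that by blast
qed

lemma limpt_exists:
  assumes S: "S \<in> sets borel" "S \<subseteq> {0..}" "emeasure lborel S > 0"
    and ae: "AE z in lborel. z \<in> S \<longrightarrow> P z"
  obtains T and \<xi> :: real where "T \<subseteq> S" "\<And>z. z \<in> T \<Longrightarrow> P z" "\<xi> islimpt T"
proof -
  obtain N where N: "\<And>x. x \<in> space lborel - N \<Longrightarrow> x \<in> S \<longrightarrow> P x" "N \<in> null_sets lborel"
    using AE_E3[OF ae] by blast
  define E where "E = S - N"
  have "emeasure lborel E = emeasure lborel S"
    unfolding E_def by (rule emeasure_Diff_null_set) (use N S in auto)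
  then have Epos: "emeasure lborel E > 0" using S by simp
  have "\<exists>n::nat. infinite (E \<inter> {0..real n})"
  proof (rule ccontr)
    assume "\<not> ?thesis"
    then have fin: "\<And>n::nat. finite (E \<inter> {0..real n})" by blast
    have "E = (\<Union>n::nat. E \<inter> {0..real n})"
    proof
      show "E \<subseteq> (\<Union>n::nat. E \<inter> {0..real n})"
      proof
        fix x assume x: "x \<in> E"
        then have "0 \<le> x" using S unfolding E_def by auto
        moreover obtain n :: nat where "x \<le> real n" using real_arch_simple by blast
        ultimately show "x \<in> (\<Union>n::nat. E \<inter> {0..real n})" using x by auto
      qed
    qed auto
    moreover have "countable (\<Union>n::nat. E \<inter> {0..real n})"
      by (rule countable_UN) (simp_all add: countable_finite fin countableI_type)
    ultimately have "countable E" by simp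
    then have "emeasure lborel E = 0"
      using countable_imp_null_set_lborel by auto
    then show False using Epos by simp
  qed
  then obtain n :: nat where inf: "infinite (E \<inter> {0..real n})" by blast
  obtain \<xi> where "\<xi> \<in> {0..real n}" "\<xi> islimpt (E \<inter> {0..real n})"
    using Heine_Borel_imp_Bolzano_Weierstrass[OF compact_Icc inf] by blast
  moreover have "E \<inter> {0..real n} \<subseteq> S" unfolding E_def by auto
  moreover have "P z" if "z \<in> E \<inter> {0..real n}" for z
    using N(1)[of z] that unfolding E_def by auto
  ultimately show ?thesis using that by blast
qed



definition EG :: "real measure \<Rightarrow> complex \<Rightarrow> complex" where
  "EG G w = (\<integral>mu. complex_of_real (wt mu) * exp (w * complex_of_real mu) \<partial>G)"
definition mom :: "real measure \<Rightarrow> nat \<Rightarrow> real" where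
  "mom G n = (\<integral>mu. wt mu * mu ^ n \<partial>G)"

lemma pow_fact_le_exp:
  assumes "0 \<le> (x::real)" shows "x ^ n / fact n \<le> exp x"
proof -
  have s: "(\<lambda>n. x ^ n /\<^sub>R fact n) sums exp x" by (rule exp_converges)
  have "(\<Sum>i\<in>{n}. x ^ i /\<^sub>R fact i) \<le> (\<Sum>i. x ^ i /\<^sub>R fact i)"
    by (rule sum_le_suminf) (use s assms in \<open>auto simp: sums_iff\<close>)
  then show ?thesis using s by (simp add: sums_iff divide_inverse_commute)
qed

lemma wt_pos: "0 < wt mu" by (simp add: wt_def)

lemma wt_exp_bound:
  assumes "0 \<le> r" shows "wt mu * exp (r * \<bar>mu\<bar>) \<le> exp (r\<^sup>2 / 2)"
proof -
  have "wt mu * exp (r * \<bar>mu\<bar>) = exp (- (mu\<^sup>2) / 2 + r * \<bar>mu\<bar>)"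
    unfolding wt_def mult_exp_exp by simp
  also have "\<dots> \<le> exp (r\<^sup>2 / 2)"
  proof -
    have "0 \<le> (\<bar>mu\<bar> - r)\<^sup>2" by simp
    moreover have "mu\<^sup>2 = \<bar>mu\<bar>\<^sup>2" by simp
    ultimately have "- (mu\<^sup>2) / 2 + r * \<bar>mu\<bar> \<le> r\<^sup>2 / 2"
      by (simp add: power2_eq_square algebra_simps)
    then show ?thesis by simp
  qed
  finally show ?thesis .
qed

lemma meas_G:
  assumes "sets G = sets borel" "f \<in> borel_measurable borel"
  shows "f \<in> borel_measurable G"
  by (subst measurable_cong_sets[OF assms(1) refl]) (rule assms(2))

lemma EG_integrable:
  assumes G: "prob_space G" "sets G = sets borel"
  shows "integrable G (\<lambda>mu. complex_of_real (wt mu) * exp (w * complex_of_real mu))"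
proof -
  interpret G: prob_space G by (rule G(1))
  show ?thesis
  proof (rule G.integrable_const_bound[where B="exp ((cmod w)\<^sup>2 / 2)"])
    show "(\<lambda>mu. complex_of_real (wt mu) * exp (w * complex_of_real mu)) \<in> borel_measurable G"
      by (rule meas_G[OF G(2)]) (unfold wt_def, measurable)
    show "AE mu in G. norm (complex_of_real (wt mu) * exp (w * complex_of_real mu)) \<le> exp ((cmod w)\<^sup>2 / 2)"
    proof (rule AE_I2)
      fix mu
      have "Re w * mu \<le> cmod w * \<bar>mu\<bar>"
      proof -
        have "Re w * mu \<le> \<bar>Re w * mu\<bar>" by simp
        also have "\<dots> = \<bar>Re w\<bar> * \<bar>mu\<bar>" by (simp add: abs_mult)
        also have "\<dots> \<le> cmod w * \<bar>mu\<bar>" by (intro mult_right_mono abs_Re_le_cmod) simp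
        finally show ?thesis .
      qed
      then have "norm (complex_of_real (wt mu) * exp (w * complex_of_real mu)) \<le> wt mu * exp (cmod w * \<bar>mu\<bar>)"
        using wt_pos[of mu] by (simp add: norm_mult norm_exp_eq_Re)
      also have "\<dots> \<le> exp ((cmod w)\<^sup>2 / 2)" by (rule wt_exp_bound) simp
      finally show "norm (complex_of_real (wt mu) * exp (w * complex_of_real mu)) \<le> exp ((cmod w)\<^sup>2 / 2)" .
    qed
  qed
qed

lemma EG_sums:
  assumes G: "prob_space G" "sets G = sets borel"
  shows "(\<lambda>n. complex_of_real (mom G n / fact n) * w ^ n) sums EG G w"
proof -
  interpret G: prob_space G by (rule G(1))
  define f where "f n mu = complex_of_real (wt mu * mu ^ n / fact n) * w ^ n" for n mu
  define B where "B = exp ((cmod w)\<^sup>2 / 2)"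
  have fm[measurable]: "f n \<in> borel_measurable G" for n
    by (rule meas_G[OF G(2)]) (unfold f_def wt_def, measurable)
  have nf: "norm (f n mu) = wt mu * ((cmod w * \<bar>mu\<bar>) ^ n / fact n)" for n mu
    by (simp only: f_def norm_mult norm_of_real norm_power)
       (use wt_pos[of mu] in \<open>simp add: abs_mult power_abs power_mult_distrib field_simps\<close>)
  have sn: "(\<lambda>n. norm (f n mu)) sums (wt mu * exp (cmod w * \<bar>mu\<bar>))" for mu
    unfolding nf using exp_converges[of "cmod w * \<bar>mu\<bar>"]
    by (intro sums_mult) (simp add: divide_inverse_commute)
  have nb: "norm (f n mu) \<le> B" for n mu
  proof -
    have "norm (f n mu) \<le> wt mu * exp (cmod w * \<bar>mu\<bar>)"
      unfolding nf using wt_pos[of mu] by (intro mult_left_mono pow_fact_le_exp) auto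
    also have "\<dots> \<le> B" unfolding B_def by (rule wt_exp_bound) simp
    finally show ?thesis .
  qed
  have fi: "integrable G (f n)" for n
    using nb fm by (intro G.integrable_const_bound[where B=B]) auto
  have sum_int: "summable (\<lambda>n. \<integral>mu. norm (f n mu) \<partial>G)"
  proof (rule summable_suminf_not_top)
    show "0 \<le> (\<integral>mu. norm (f n mu) \<partial>G)" for n by simp
    have "(\<Sum>n. ennreal (\<integral>mu. norm (f n mu) \<partial>G)) = (\<Sum>n. \<integral>\<^sup>+mu. ennreal (norm (f n mu)) \<partial>G)"
      by (rule arg_cong[where f=suminf], rule ext, rule nn_integral_eq_integral[symmetric], rule integrable_norm, rule fi, simp)
    also have "\<dots> = (\<integral>\<^sup>+mu. (\<Sum>n. ennreal (norm (f n mu))) \<partial>G)"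
      by (rule nn_integral_suminf[symmetric]) measurable
    also have "\<dots> = (\<integral>\<^sup>+mu. ennreal (wt mu * exp (cmod w * \<bar>mu\<bar>)) \<partial>G)"
    proof (intro nn_integral_cong)
      fix mu
      have "(\<lambda>n. ennreal (norm (f n mu))) sums ennreal (wt mu * exp (cmod w * \<bar>mu\<bar>))"
        using sn[of mu] wt_pos[of mu] by (subst sums_ennreal) auto
      then show "(\<Sum>n. ennreal (norm (f n mu))) = ennreal (wt mu * exp (cmod w * \<bar>mu\<bar>))"
        by (rule sums_unique[symmetric])
    qed
    also have "\<dots> \<le> (\<integral>\<^sup>+mu. ennreal B \<partial>G)"
      by (intro nn_integral_mono ennreal_leI) (unfold B_def, rule wt_exp_bound, simp)
    also have "\<dots> = ennreal B" by (simp add: G.emeasure_space_1)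
    finally have le: "(\<Sum>n. ennreal (\<integral>mu. norm (f n mu) \<partial>G)) \<le> ennreal B" .
    show "(\<Sum>n. ennreal (\<integral>mu. norm (f n mu) \<partial>G)) \<noteq> \<top>"
      by (rule neq_top_trans[OF _ le]) simp
  qed
  have "(\<lambda>n. integral\<^sup>L G (f n)) sums (\<integral>mu. (\<Sum>n. f n mu) \<partial>G)"
    by (rule sums_integral[OF fi _ sum_int]) (rule AE_I2, rule sums_summable[OF sn])
  moreover have "integral\<^sup>L G (f n) = complex_of_real (mom G n / fact n) * w ^ n" for n
    unfolding f_def mom_def by (simp only: integral_mult_left_zero integral_complex_of_real integral_divide_zero)
  moreover have "(\<Sum>n. f n mu) = complex_of_real (wt mu) * exp (w * complex_of_real mu)" for mu
  proof -
    have "(\<lambda>n. complex_of_real (wt mu) * ((w * complex_of_real mu) ^ n /\<^sub>R fact n)) sums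
        (complex_of_real (wt mu) * exp (w * complex_of_real mu))"
      by (intro sums_mult exp_converges)
    moreover have "complex_of_real (wt mu) * ((w * complex_of_real mu) ^ n /\<^sub>R fact n) = f n mu" for n
      by (simp add: f_def scaleR_conv_of_real power_mult_distrib field_simps)
    ultimately show ?thesis by (simp add: sums_iff)
  qed
  ultimately show ?thesis unfolding EG_def by simp
qed



definition coef :: "real measure \<Rightarrow> nat \<Rightarrow> real" where
  "coef G n = (if even n then 2 * mom G n / fact n else 0)"
definition PS :: "real measure \<Rightarrow> complex \<Rightarrow> complex" where
  "PS G w = (\<Sum>n. complex_of_real (coef G n) * w ^ n)"

lemma PS_sums:
  assumes G: "prob_space G" "sets G = sets borel"
  shows "(\<lambda>n. complex_of_real (coef G n) * w ^ n) sums (EG G w + EG G (- w))"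
proof -
  have "(\<lambda>n. complex_of_real (mom G n / fact n) * w ^ n + complex_of_real (mom G n / fact n) * (- w) ^ n)
      sums (EG G w + EG G (- w))"
    by (intro sums_add EG_sums[OF G])
  moreover have "complex_of_real (mom G n / fact n) * w ^ n + complex_of_real (mom G n / fact n) * (- w) ^ n
      = complex_of_real (coef G n) * w ^ n" for n
    by (cases "even n") (simp_all add: coef_def)
  ultimately show ?thesis by simp
qed

lemma PS_eq:
  assumes G: "prob_space G" "sets G = sets borel"
  shows "PS G w = EG G w + EG G (- w)"
  unfolding PS_def using sums_unique[OF PS_sums[OF G, of w]] by simp

lemma PS_holo:
  assumes G: "prob_space G" "sets G = sets borel"
  shows "PS G holomorphic_on UNIV"
proof -
  have e: "PS G = (\<lambda>x. \<Sum>n. complex_of_real (coef G n) * x ^ n)" by (simp add: fun_eq_iff PS_def)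
  have summ: "summable (\<lambda>n. complex_of_real (coef G n) * y ^ n)" for y
    using sums_summable[OF PS_sums[OF G, of y]] .
  show ?thesis unfolding e holomorphic_on_open[OF open_UNIV]
  proof (intro ballI exI)
    fix x :: complex
    show "((\<lambda>x. \<Sum>n. complex_of_real (coef G n) * x ^ n) has_field_derivative
        (\<Sum>n. diffs (\<lambda>n. complex_of_real (coef G n)) n * x ^ n)) (at x)"
      by (rule termdiffs_strong_converges_everywhere) (rule summ)
  qed
qed

lemma fG_PS:
  assumes G: "prob_space G" "sets G = sets borel" and z: "0 \<le> z"
  shows "complex_of_real (fG G z) = complex_of_real (Kz z) * PS G (complex_of_real z)"
proof -
  have "fG G z = (\<integral>mu. Kz z * (wt mu * (exp (z * mu) + exp (- (z * mu)))) \<partial>G)"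
    unfolding fG_def by (rule Bochner_Integration.integral_cong[OF refl]) (rule fnorm_dens_factor[OF z])
  also have "\<dots> = Kz z * (\<integral>mu. wt mu * (exp (z * mu) + exp (- (z * mu))) \<partial>G)"
    by (rule integral_mult_right_zero)
  finally have 1: "complex_of_real (fG G z) = complex_of_real (Kz z) *
      complex_of_real (\<integral>mu. wt mu * (exp (z * mu) + exp (- (z * mu))) \<partial>G)" by simp
  have "complex_of_real (\<integral>mu. wt mu * (exp (z * mu) + exp (- (z * mu))) \<partial>G) =
      (\<integral>mu. complex_of_real (wt mu * (exp (z * mu) + exp (- (z * mu)))) \<partial>G)"
    by (rule integral_complex_of_real[symmetric])
  also have "\<dots> = (\<integral>mu. complex_of_real (wt mu) * exp (complex_of_real z * complex_of_real mu) +
       complex_of_real (wt mu) * exp ((- complex_of_real z) * complex_of_real mu) \<partial>G)"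
  proof (rule Bochner_Integration.integral_cong[OF refl])
    fix mu
    have a: "exp (complex_of_real z * complex_of_real mu) = complex_of_real (exp (z * mu))"
      by (simp flip: of_real_mult exp_of_real)
    have b: "exp ((- complex_of_real z) * complex_of_real mu) = complex_of_real (exp (- (z * mu)))"
      by (simp flip: of_real_mult exp_of_real of_real_minus)
    show "complex_of_real (wt mu * (exp (z * mu) + exp (- (z * mu)))) =
       complex_of_real (wt mu) * exp (complex_of_real z * complex_of_real mu) +
       complex_of_real (wt mu) * exp ((- complex_of_real z) * complex_of_real mu)"
      unfolding a b by (simp add: distrib_left)
  qed
  also have "\<dots> = EG G (complex_of_real z) + EG G (- complex_of_real z)"
    unfolding EG_def by (rule Bochner_Integration.integral_add[OF EG_integrable[OF G] EG_integrable[OF G]])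
  also have "\<dots> = PS G (complex_of_real z)" by (rule PS_eq[OF G, symmetric])
  finally show ?thesis using 1 by simp
qed

lemma Kz_pos: "0 < Kz z" by (simp add: Kz_def)

lemma dist_of_real_complex: "dist (complex_of_real a) (complex_of_real b) = dist a b"
  by (simp add: dist_norm flip: of_real_diff)

lemma islimpt_of_real:
  assumes "(x::real) islimpt T"
  shows "complex_of_real x islimpt (complex_of_real ` T)"
  unfolding islimpt_approachable
proof (intro allI impI)
  fix e :: real assume "0 < e"
  then obtain x' where "x' \<in> T" "x' \<noteq> x" "dist x' x < e"
    using assms unfolding islimpt_approachable by blast
  then show "\<exists>y\<in>complex_of_real ` T. y \<noteq> complex_of_real x \<and> dist y (complex_of_real x) < e"
    by (intro bexI[of _ "complex_of_real x'"]) (auto simp: dist_of_real_complex)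
qed

lemma cont_eq:
  assumes G: "prob_space G" "sets G = sets borel" and H: "prob_space H" "sets H = sets borel"
    and T: "T \<subseteq> {0..}" "\<xi> islimpt T" and eq: "\<And>z. z \<in> T \<Longrightarrow> \<kappa>G * fG G z = \<kappa>H * fG H z"
  shows "complex_of_real \<kappa>G * PS G w = complex_of_real \<kappa>H * PS H w"
proof -
  define F where "F w = complex_of_real \<kappa>G * PS G w - complex_of_real \<kappa>H * PS H w" for w
  have holo: "F holomorphic_on UNIV"
    unfolding F_def[abs_def] using PS_holo[OF G] PS_holo[OF H] by (intro holomorphic_intros)
  have zero: "F y = 0" if y: "y \<in> complex_of_real ` T" for y
  proof -
    obtain z where z: "z \<in> T" "y = complex_of_real z" using y by blast
    have z0: "0 \<le> z" using z T by auto
    have "complex_of_real (\<kappa>G * fG G z) = complex_of_real (\<kappa>H * fG H z)" using eq[OF z(1)] by simp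
    then have "complex_of_real (Kz z) * (complex_of_real \<kappa>G * PS G y) = complex_of_real (Kz z) * (complex_of_real \<kappa>H * PS H y)"
      unfolding of_real_mult fG_PS[OF G z0] fG_PS[OF H z0] z(2) by (simp add: ac_simps)
    then have "complex_of_real \<kappa>G * PS G y = complex_of_real \<kappa>H * PS H y"
      using Kz_pos[of z] by simp
    then show ?thesis unfolding F_def by simp
  qed
  have "F w = 0"
    by (rule analytic_continuation[OF holo open_UNIV connected_UNIV subset_UNIV UNIV_I islimpt_of_real[OF T(2)] zero UNIV_I])
  then show ?thesis unfolding F_def by simp
qed



definition Bm :: "bool measure" where "Bm = measure_pmf (bernoulli_pmf (1/2))"
definition sflip :: "real \<times> bool \<Rightarrow> real" where "sflip = (\<lambda>(x, b). if b then x else - x)"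
definition Sym :: "real measure \<Rightarrow> real measure" where "Sym \<nu> = distr (\<nu> \<Otimes>\<^sub>M Bm) borel sflip"

lemma sets_Bm: "sets Bm = sets (count_space UNIV)" by (simp add: Bm_def)

lemma sflip_meas:
  assumes "sets \<nu> = sets borel"
  shows "sflip \<in> measurable (\<nu> \<Otimes>\<^sub>M Bm) borel"
proof -
  have s: "sets (\<nu> \<Otimes>\<^sub>M Bm) = sets (borel \<Otimes>\<^sub>M count_space (UNIV :: bool set))"
    by (rule sets_pair_measure_cong[OF assms sets_Bm])
  show ?thesis
    by (subst measurable_cong_sets[OF s refl]) (unfold sflip_def, measurable)
qed

lemma Sym_real_dist:
  assumes "prob_space \<nu>" "sets \<nu> = sets borel"
  shows "real_distribution (Sym \<nu>)"
proof -
  have "prob_space (\<nu> \<Otimes>\<^sub>M Bm)"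
    by (rule prob_space_pair[OF assms(1)]) (simp add: Bm_def prob_space_measure_pmf)
  then have "prob_space (Sym \<nu>)"
    unfolding Sym_def by (rule prob_space.prob_space_distr[OF _ sflip_meas[OF assms(2)]])
  then show ?thesis
    by (simp add: real_distribution_def real_distribution_axioms_def Sym_def)
qed

lemma char_Sym:
  assumes P: "prob_space \<nu>" "sets \<nu> = sets borel"
  shows "char (Sym \<nu>) t = (\<integral>x. (iexp (t * x) + iexp (- (t * x))) / 2 \<partial>\<nu>)"
proof -
  interpret \<nu>: prob_space \<nu> by (rule P(1))
  have pB: "prob_space Bm" by (simp add: Bm_def prob_space_measure_pmf)
  interpret B: prob_space Bm by (rule pB)
  interpret PB: pair_prob_space \<nu> Bm by unfold_locales
  have sm: "sflip \<in> measurable (\<nu> \<Otimes>\<^sub>M Bm) borel" by (rule sflip_meas[OF P(2)])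
  have "char (Sym \<nu>) t = (\<integral>y. iexp (t * sflip y) \<partial>(\<nu> \<Otimes>\<^sub>M Bm))"
    unfolding char_def Sym_def by (rule integral_distr[OF sm]) measurable
  also have "\<dots> = (\<integral>x. \<integral>b. iexp (t * sflip (x, b)) \<partial>Bm \<partial>\<nu>)"
  proof (rule PB.integral_fst'[symmetric])
    show "integrable (\<nu> \<Otimes>\<^sub>M Bm) (\<lambda>y. iexp (t * sflip y))"
    proof (rule PB.integrable_const_bound[where B=1])
      show "AE y in \<nu> \<Otimes>\<^sub>M Bm. norm (iexp (t * sflip y)) \<le> 1" by simp
      show "(\<lambda>y. iexp (t * sflip y)) \<in> borel_measurable (\<nu> \<Otimes>\<^sub>M Bm)"
        using sm by measurable
    qed
  qed
  also have "\<dots> = (\<integral>x. (iexp (t * x) + iexp (- (t * x))) / 2 \<partial>\<nu>)"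
  proof (rule Bochner_Integration.integral_cong[OF refl])
    fix x
    have "(\<integral>b. iexp (t * sflip (x, b)) \<partial>Bm) = (\<Sum>b\<in>UNIV. pmf (bernoulli_pmf (1/2)) b *\<^sub>R iexp (t * sflip (x, b)))"
      unfolding Bm_def by (rule integral_measure_pmf) auto
    also have "\<dots> = (iexp (t * x) + iexp (- (t * x))) / 2"
      by (simp add: UNIV_bool sflip_def scaleR_conv_of_real field_simps)
    finally show "(\<integral>b. iexp (t * sflip (x, b)) \<partial>Bm) = (iexp (t * x) + iexp (- (t * x))) / 2" .
  qed
  finally show ?thesis .
qed



definition nu :: "real measure \<Rightarrow> real \<Rightarrow> real measure" where
  "nu K c = density K (\<lambda>mu. ennreal (c * wt mu))"

lemma wt_le1: "wt mu \<le> 1" by (simp add: wt_def)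
lemma wt_abs: "wt \<bar>mu\<bar> = wt mu" by (simp add: wt_def)
lemma wt_meas[measurable]: "wt \<in> borel_measurable borel" unfolding wt_def[abs_def] by measurable

lemma wt_integrable:
  assumes K: "prob_space K" "sets K = sets borel"
  shows "integrable K wt"
proof -
  interpret K: prob_space K by (rule K(1))
  show ?thesis
    by (rule K.integrable_const_bound[where B=1]) (use wt_le1 wt_pos meas_G[OF K(2) wt_meas] in \<open>auto simp: less_imp_le\<close>)
qed

lemma mom0: "mom K 0 = (\<integral>mu. wt mu \<partial>K)" by (simp add: mom_def)

lemma mom0_pos:
  assumes K: "prob_space K" "sets K = sets borel"
  shows "0 < mom K 0"
proof -
  interpret K: prob_space K by (rule K(1))
  have nn: "AE x in K. 0 \<le> wt x" using wt_pos by (simp add: less_imp_le)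
  have "0 \<le> mom K 0" unfolding mom0 using nn by (rule integral_nonneg_AE)
  moreover have "mom K 0 \<noteq> 0"
  proof
    assume "mom K 0 = 0"
    then have "AE x in K. wt x = 0"
      unfolding mom0 using integral_nonneg_eq_0_iff_AE[OF wt_integrable[OF K] nn] by simp
    then have "AE x in K. False" by (rule eventually_mono) (use wt_pos in \<open>simp add: less_le\<close>)
    then show False by (simp add: K.AE_False)
  qed
  ultimately show ?thesis by simp
qed

lemma nu_prob:
  assumes K: "prob_space K" "sets K = sets borel" and c: "0 < c" "c * mom K 0 = 1"
  shows "prob_space (nu K c)" "sets (nu K c) = sets borel"
proof -
  interpret K: prob_space K by (rule K(1))
  have m: "(\<lambda>mu. ennreal (c * wt mu)) \<in> borel_measurable K"
    by (rule meas_G[OF K(2)]) measurable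
  show "prob_space (nu K c)"
  proof (rule prob_spaceI)
    have "emeasure (nu K c) (space (nu K c)) = (\<integral>\<^sup>+mu. ennreal (c * wt mu) * indicator (space K) mu \<partial>K)"
      unfolding nu_def by (simp add: emeasure_density[OF m])
    also have "\<dots> = (\<integral>\<^sup>+mu. ennreal (c * wt mu) \<partial>K)"
      by (intro nn_integral_cong) simp
    also have "\<dots> = ennreal (\<integral>mu. c * wt mu \<partial>K)"
      by (rule nn_integral_eq_integral) (use wt_integrable[OF K] c wt_pos in \<open>auto simp: less_imp_le\<close>)
    also have "(\<integral>mu. c * wt mu \<partial>K) = 1" using c(2) by (simp add: mom0)
    finally show "emeasure (nu K c) (space (nu K c)) = 1" by simp
  qed
  show "sets (nu K c) = sets borel" using K(2) by (simp add: nu_def)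
qed

lemma char_nu:
  assumes K: "prob_space K" "sets K = sets borel" and c: "0 \<le> c"
  shows "(\<integral>x. (iexp (t * x) + iexp (- (t * x))) / 2 \<partial>(nu K c)) =
    complex_of_real (c / 2) * PS K (\<i> * complex_of_real t)"
proof -
  have "(\<integral>x. (iexp (t * x) + iexp (- (t * x))) / 2 \<partial>(nu K c)) =
      (\<integral>mu. (c * wt mu) *\<^sub>R ((iexp (t * mu) + iexp (- (t * mu))) / 2) \<partial>K)"
    unfolding nu_def
    by (rule integral_density) (use c wt_pos in \<open>auto intro!: meas_G[OF K(2)] simp: less_imp_le\<close>)
  also have "\<dots> = (\<integral>mu. complex_of_real (c / 2) *
      (complex_of_real (wt mu) * exp ((\<i> * complex_of_real t) * complex_of_real mu) +
       complex_of_real (wt mu) * exp ((- (\<i> * complex_of_real t)) * complex_of_real mu)) \<partial>K)"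
  proof (rule Bochner_Integration.integral_cong[OF refl])
    fix mu
    have a: "iexp (t * mu) = exp ((\<i> * complex_of_real t) * complex_of_real mu)"
      by (simp add: ac_simps)
    have b: "iexp (- (t * mu)) = exp ((- (\<i> * complex_of_real t)) * complex_of_real mu)"
      by (simp add: ac_simps)
    show "(c * wt mu) *\<^sub>R ((iexp (t * mu) + iexp (- (t * mu))) / 2) =
      complex_of_real (c / 2) *
      (complex_of_real (wt mu) * exp ((\<i> * complex_of_real t) * complex_of_real mu) +
       complex_of_real (wt mu) * exp ((- (\<i> * complex_of_real t)) * complex_of_real mu))"
      unfolding a b by (simp add: scaleR_conv_of_real field_simps)
  qed
  also have "\<dots> = complex_of_real (c / 2) * (EG K (\<i> * complex_of_real t) + EG K (- (\<i> * complex_of_real t)))"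
    unfolding EG_def
    by (subst integral_mult_right_zero) (rule arg_cong[where f="\<lambda>x. _ * x"], rule Bochner_Integration.integral_add[OF EG_integrable[OF K] EG_integrable[OF K]])
  also have "\<dots> = complex_of_real (c / 2) * PS K (\<i> * complex_of_real t)"
    by (simp add: PS_eq[OF K])
  finally show ?thesis .
qed

lemma Fold_Sym:
  assumes P: "prob_space \<nu>" "sets \<nu> = sets borel"
  shows "distr (Sym \<nu>) borel abs = distr \<nu> borel abs"
proof -
  interpret B: prob_space Bm by (simp add: Bm_def prob_space_measure_pmf)
  have sm: "sflip \<in> measurable (\<nu> \<Otimes>\<^sub>M Bm) borel" by (rule sflip_meas[OF P(2)])
  have am: "abs \<in> measurable borel (borel :: real measure)" by measurable
  have am': "abs \<in> measurable \<nu> (borel :: real measure)" by (rule meas_G[OF P(2)]) measurable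
  have "distr (Sym \<nu>) borel abs = distr (\<nu> \<Otimes>\<^sub>M Bm) borel (abs \<circ> sflip)"
    unfolding Sym_def by (rule distr_distr[OF am sm])
  also have "\<dots> = distr (\<nu> \<Otimes>\<^sub>M Bm) borel (abs \<circ> fst)"
    by (rule distr_cong) (auto simp: sflip_def)
  also have "\<dots> = distr (distr (\<nu> \<Otimes>\<^sub>M Bm) \<nu> fst) borel abs"
    by (rule distr_distr[OF am' measurable_fst, symmetric])
  also have "distr (\<nu> \<Otimes>\<^sub>M Bm) \<nu> fst = \<nu>" by (rule B.distr_pair_fst)
  finally show ?thesis .
qed



lemma PS0:
  assumes K: "prob_space K" "sets K = sets borel"
  shows "PS K 0 = 2 * complex_of_real (mom K 0)"
proof -
  have "EG K 0 = complex_of_real (mom K 0)" by (simp add: EG_def mom0)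
  then show ?thesis using PS_eq[OF K, of 0] by simp
qed

lemma Fold_prob:
  assumes K: "prob_space K" "sets K = sets borel"
  shows "prob_space (Fold K)"
  unfolding Fold_def by (rule prob_space.prob_space_distr[OF K(1)]) (rule meas_G[OF K(2)], measurable)

lemma dens_Fold:
  assumes K: "prob_space K" "sets K = sets borel"
  shows "density (Fold K) (\<lambda>y. ennreal (c * wt y)) = distr (nu K c) borel abs"
proof -
  have "density (Fold K) (\<lambda>y. ennreal (c * wt y)) = distr (density K (\<lambda>x. ennreal (c * wt \<bar>x\<bar>))) borel abs"
    unfolding Fold_def by (rule density_distr) (measurable, rule meas_G[OF K(2)], measurable)
  then show ?thesis by (simp add: nu_def wt_abs)
qed

lemma Fold_from_PS:
  assumes G: "prob_space G" "sets G = sets borel" and H: "prob_space H" "sets H = sets borel"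
    and kG: "0 < \<kappa>G" and kH: "0 < \<kappa>H"
    and eq: "\<And>w. complex_of_real \<kappa>G * PS G w = complex_of_real \<kappa>H * PS H w"
  shows "Fold G = Fold H"
proof -
  have "complex_of_real (\<kappa>G * mom G 0) = complex_of_real (\<kappa>H * mom H 0)"
    using eq[of 0] unfolding PS0[OF G] PS0[OF H] by simp
  then have Zeq: "\<kappa>G * mom G 0 = \<kappa>H * mom H 0" by (simp only: of_real_eq_iff)
  define Z where "Z = \<kappa>G * mom G 0"
  have Zpos: "0 < Z" unfolding Z_def using kG mom0_pos[OF G] by simp
  define cG where "cG = \<kappa>G / Z"
  define cH where "cH = \<kappa>H / Z"
  have cGp: "0 < cG" "cG * mom G 0 = 1" unfolding cG_def using kG Zpos mom0_pos[OF G] by (auto simp: Z_def)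
  have cHp: "0 < cH" "cH * mom H 0 = 1" unfolding cH_def using kH Zpos Zeq mom0_pos[OF H] by (auto simp: Z_def)
  note nG = nu_prob[OF G cGp] and nH = nu_prob[OF H cHp]
  have "char (Sym (nu G cG)) = char (Sym (nu H cH))"
  proof
    fix t
    have "char (Sym (nu G cG)) t = complex_of_real (cG / 2) * PS G (\<i> * complex_of_real t)"
      unfolding char_Sym[OF nG] char_nu[OF G less_imp_le[OF cGp(1)]] ..
    also have "\<dots> = complex_of_real (1 / (2 * Z)) * (complex_of_real \<kappa>G * PS G (\<i> * complex_of_real t))"
      unfolding cG_def by simp
    also have "\<dots> = complex_of_real (1 / (2 * Z)) * (complex_of_real \<kappa>H * PS H (\<i> * complex_of_real t))"
      unfolding eq ..
    also have "\<dots> = complex_of_real (cH / 2) * PS H (\<i> * complex_of_real t)"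
      unfolding cH_def by simp
    also have "\<dots> = char (Sym (nu H cH)) t"
      unfolding char_Sym[OF nH] char_nu[OF H less_imp_le[OF cHp(1)]] ..
    finally show "char (Sym (nu G cG)) t = char (Sym (nu H cH)) t" .
  qed
  then have "Sym (nu G cG) = Sym (nu H cH)"
    by (intro Levy_uniqueness Sym_real_dist nG nH)
  then have "distr (nu G cG) borel abs = distr (nu H cH) borel abs"
    using Fold_Sym[OF nG] Fold_Sym[OF nH] by simp
  then have dd: "density (Fold G) (\<lambda>y. ennreal (cG * wt y)) = density (Fold H) (\<lambda>y. ennreal (cH * wt y))"
    unfolding dens_Fold[OF G] dens_Fold[OF H] .
  have sF: "sets (Fold K) = sets borel" for K by (simp add: Fold_def)
  have mF: "f \<in> borel_measurable borel \<Longrightarrow> f \<in> borel_measurable (Fold K)" for f and K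
    by (rule meas_G[OF sF])
  have inv: "ennreal (c * wt y) * ennreal (1 / (c * wt y)) = 1" if "0 < c" for c y
    using that wt_pos[of y] by (simp add: ennreal_mult[symmetric] less_imp_le)
  have "Fold G = density (Fold G) (\<lambda>_. 1)" by (simp add: density_1)
  also have "\<dots> = density (Fold G) (\<lambda>y. ennreal (cG * wt y) * ennreal (1 / (cG * wt y)))"
    using inv[OF cGp(1)] by simp
  also have "\<dots> = density (density (Fold G) (\<lambda>y. ennreal (cG * wt y))) (\<lambda>y. ennreal (1 / (cG * wt y)))"
    by (rule density_density_eq[symmetric]) (rule mF, measurable)+
  also have "\<dots> = density (density (Fold H) (\<lambda>y. ennreal (cH * wt y))) (\<lambda>y. ennreal (1 / (cG * wt y)))"
    unfolding dd ..
  also have "\<dots> = density (Fold H) (\<lambda>y. ennreal (cH * wt y) * ennreal (1 / (cG * wt y)))"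
    by (rule density_density_eq) (rule mF, measurable)+
  also have "\<dots> = density (Fold H) (\<lambda>_. ennreal (cH / cG))"
  proof -
    have "ennreal (cH * wt y) * ennreal (1 / (cG * wt y)) = ennreal (cH / cG)" for y
      using cGp(1) cHp(1) wt_pos[of y] by (simp add: ennreal_mult[symmetric] less_imp_le)
    then show ?thesis by simp
  qed
  finally have FG: "Fold G = density (Fold H) (\<lambda>_. ennreal (cH / cG))" .
  interpret FG: prob_space "Fold G" by (rule Fold_prob[OF G])
  interpret FH: prob_space "Fold H" by (rule Fold_prob[OF H])
  have "1 = emeasure (Fold G) (space (Fold H))"
    using FG.emeasure_space_1 by (simp add: Fold_def)
  also have "\<dots> = ennreal (cH / cG) * emeasure (Fold H) (space (Fold H))"
    unfolding FG by (rule emeasure_density_const) simp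
  also have "\<dots> = ennreal (cH / cG)" by (simp add: FH.emeasure_space_1)
  finally have "cH / cG = 1" using cGp(1) cHp(1) by simp
  then show ?thesis using FG by (simp add: density_1)
qed

theorem theorem1:
  fixes S :: "real set" and G H :: "real measure" and p p' :: "real \<Rightarrow> real"
  assumes "S \<in> sets borel" and "S \<subseteq> {0..}" and "emeasure lborel S > 0"
    and "prob_space G" and "sets G = sets borel"
    and "prob_space H" and "sets H = sets borel"
    and "pub_prob p" and "pub_prob p'"
    and "selection_ok S (model G p)" and "selection_ok S (model H p')"
    and "\<forall>A \<in> sets borel. cond_law_absZ (model G p) ev_D A = cond_law_absZ (model H p') ev_D A"
  shows "Fold G = Fold H"
proof -
  note G = assms(4,5) and H = assms(6,7)
  obtain \<kappa>G \<kappa>H where k: "0 < \<kappa>G" "0 < \<kappa>H"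
    and ae: "AE z in lborel. z \<in> S \<longrightarrow> \<kappa>G * fG G z = \<kappa>H * fG H z"
    using dens_eq_on_S[OF G H assms(8,9,1,10,11,12)] by blast
  obtain T and \<xi> :: real where T: "T \<subseteq> S" "\<And>z. z \<in> T \<Longrightarrow> \<kappa>G * fG G z = \<kappa>H * fG H z" "\<xi> islimpt T"
    using limpt_exists[OF assms(1,2,3) ae] by blast
  have T0: "T \<subseteq> {0..}" using T(1) assms(2) by blast
  have "complex_of_real \<kappa>G * PS G w = complex_of_real \<kappa>H * PS H w" for w
    by (rule cont_eq[OF G H T0 T(3) T(2)])
  then show ?thesis by (rule Fold_from_PS[OF G H k])
qed

end
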